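(* Let $\beta,p,n$ be positive integers and $\mathcal{S}=\mathcal{S}_n(\beta,p)$. If $j$ is an integer with $n-\log_2|\mathcal{S}|+\log_2 n\le j\le n$, then there exists an $(n,j)$ linear code $B_j$ such that $m_{B_j}<1$, where $m_{B}=|V_n\setminus(B+\mathcal{S})|$; that is, $B_j+\mathcal{S}=V_n$.
   Context: $V_n=\{0,1\}^n$ with componentwise addition mod 2. A binary vector is $(\beta,p)$-window-weight-limited if every $\beta$ consecutive entries contain at most $p$ ones; $\mathcal{S}_n(\beta,p)$ is the set of such vectors of length $n$. For $B_1,B_2\subseteq V_n$, $B_1+B_2=\{\mathbf{b}_1+\mathbf{b}_2:\mathbf{b}_i\in B_i\}$. An $(n,j)$ linear code is a $j$-dimensional subspace of $V_n$. *)

theory Defs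
  imports Complex_Main
begin

text \<open>Binary vectors of length n are bool lists of length n (True = 1).\<close>

definition Vn :: "nat \<Rightarrow> bool list set" where
  "Vn n = {x. length x = n}"

definition vadd :: "bool list \<Rightarrow> bool list \<Rightarrow> bool list" where
  "vadd x y = map2 (\<noteq>) x y"

definition vzero :: "nat \<Rightarrow> bool list" where
  "vzero n = replicate n False"

definition setadd :: "bool list set \<Rightarrow> bool list set \<Rightarrow> bool list set" where
  "setadd B1 B2 = {vadd b1 b2 | b1 b2. b1 \<in> B1 \<and> b2 \<in> B2}"

definition window_weight :: "bool list \<Rightarrow> nat \<Rightarrow> nat \<Rightarrow> nat" where
  "window_weight x i \<beta> = length (filter id (take \<beta> (drop i x)))"

definition window_limited :: "nat \<Rightarrow> nat \<Rightarrow> bool list \<Rightarrow> bool" where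
  "window_limited \<beta> p x \<longleftrightarrow> (\<forall>i. i + \<beta> \<le> length x \<longrightarrow> window_weight x i \<beta> \<le> p)"

definition Sn :: "nat \<Rightarrow> nat \<Rightarrow> nat \<Rightarrow> bool list set" where
  "Sn n \<beta> p = {x \<in> Vn n. window_limited \<beta> p x}"

definition lincomb :: "nat \<Rightarrow> bool list list \<Rightarrow> bool list \<Rightarrow> bool list" where
  "lincomb n G c = foldr vadd [G ! i. i \<leftarrow> [0..<length G], c ! i] (vzero n)"

definition gspan :: "nat \<Rightarrow> bool list list \<Rightarrow> bool list set" where
  "gspan n G = {lincomb n G c | c. length c = length G}"

definition lin_indep :: "nat \<Rightarrow> bool list list \<Rightarrow> bool" where
  "lin_indep n G \<longleftrightarrow> (\<forall>c. length c = length G \<and> lincomb n G c = vzero n \<longrightarrow> (\<forall>i<length G. \<not> c ! i))"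

definition subspace2 :: "nat \<Rightarrow> bool list set \<Rightarrow> bool" where
  "subspace2 n B \<longleftrightarrow> B \<subseteq> Vn n \<and> vzero n \<in> B \<and> (\<forall>x\<in>B. \<forall>y\<in>B. vadd x y \<in> B)"

definition linear_code :: "nat \<Rightarrow> nat \<Rightarrow> bool list set \<Rightarrow> bool" where
  "linear_code n j B \<longleftrightarrow> subspace2 n B \<and>
     (\<exists>G. length G = j \<and> set G \<subseteq> Vn n \<and> lin_indep n G \<and> gspan n G = B)"

definition mB :: "nat \<Rightarrow> nat \<Rightarrow> nat \<Rightarrow> bool list set \<Rightarrow> nat" where
  "mB n \<beta> p B = card (Vn n - setadd B (Sn n \<beta> p))"

end

theory Submission
  imports Defs
begin

lemma length_vadd[simp]: "length (vadd x y) = min (length x) (length y)"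
  by (simp add: vadd_def)

lemma vadd_comm: "vadd x y = vadd y x"
  by (rule nth_equalityI) (auto simp: vadd_def)

lemma vadd_assoc: "vadd (vadd x y) z = vadd x (vadd y z)"
  by (rule nth_equalityI) (auto simp: vadd_def)

lemma vadd_self: "vadd x x = vzero (length x)"
  by (rule nth_equalityI) (auto simp: vadd_def vzero_def)

lemma vadd_zero: "length x = n \<Longrightarrow> vadd (vzero n) x = x"
  by (rule nth_equalityI) (auto simp: vadd_def vzero_def)

lemma vadd_cancel: "length x = n \<Longrightarrow> length y = n \<Longrightarrow> vadd x (vadd x y) = y"
  by (metis vadd_assoc vadd_self vadd_zero)

lemma vadd_Vn: "x \<in> Vn n \<Longrightarrow> y \<in> Vn n \<Longrightarrow> vadd x y \<in> Vn n"
  by (simp add: Vn_def)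

lemma length_vzero[simp]: "length (vzero n) = n" by (simp add: vzero_def)

lemma vzero_Vn[simp]: "vzero n \<in> Vn n" by (simp add: Vn_def vzero_def)

fun sp :: "nat \<Rightarrow> bool list list \<Rightarrow> bool list set" where
  "sp n [] = {vzero n}"
| "sp n (v # G) = sp n G \<union> vadd v ` sp n G"

lemma lincomb_Nil: "lincomb n [] c = vzero n"
  by (simp add: lincomb_def)

lemma lincomb_Cons: "lincomb n (v # G) (b # c) = (if b then vadd v (lincomb n G c) else lincomb n G c)"
proof -
  have e: "[0..<length (v # G)] = 0 # map Suc [0..<length G]"
    by (simp add: upt_conv_Cons map_Suc_upt del: upt_Suc)
  show ?thesis
    unfolding lincomb_def e
    by (simp add: comp_def del: upt_Suc) (simp only: nth_Cons_Suc, simp)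
qed

lemma gspan_sp: "gspan n G = sp n G"
proof (induction G)
  case Nil
  then show ?case by (simp add: gspan_def lincomb_Nil)
next
  case (Cons v G)
  have "gspan n (v # G) = {lincomb n (v # G) (b # c) | b c. length c = length G}"
    unfolding gspan_def by (auto simp: length_Suc_conv)
  also have "\<dots> = gspan n G \<union> vadd v ` gspan n G"
    unfolding gspan_def lincomb_Cons by (auto split: if_splits)
  finally show ?case using Cons by simp
qed

lemma sp_Vn: "set G \<subseteq> Vn n \<Longrightarrow> sp n G \<subseteq> Vn n"
  by (induction G) (auto intro: vadd_Vn)

lemma sp_zero: "vzero n \<in> sp n G"
  by (induction G) auto

lemma sp_closed: "set G \<subseteq> Vn n \<Longrightarrow> x \<in> sp n G \<Longrightarrow> y \<in> sp n G \<Longrightarrow> vadd x y \<in> sp n G"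
proof (induction G arbitrary: x y)
  case Nil
  then show ?case by (simp add: vadd_self)
next
  case (Cons v G)
  have V: "sp n G \<subseteq> Vn n" "v \<in> Vn n" using Cons.prems sp_Vn by auto
  have L: "length a = n" if "a \<in> sp n G" for a using V that by (auto simp: Vn_def)
  have lv: "length v = n" using V by (simp add: Vn_def)
  have x: "x \<in> sp n G \<or> (\<exists>a\<in>sp n G. x = vadd v a)" using Cons.prems(2) by auto
  have y: "y \<in> sp n G \<or> (\<exists>a\<in>sp n G. y = vadd v a)" using Cons.prems(3) by auto
  have IH: "a \<in> sp n G \<Longrightarrow> b \<in> sp n G \<Longrightarrow> vadd a b \<in> sp n G" for a b
    using Cons.IH Cons.prems(1) by simp
  show ?case
  proof (cases "x \<in> sp n G")
    case True
    show ?thesis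
    proof (cases "y \<in> sp n G")
      case True
      then show ?thesis using IH \<open>x \<in> sp n G\<close> by simp
    next
      case False
      then obtain b where b: "b \<in> sp n G" "y = vadd v b" using y by auto
      have "vadd x y = vadd v (vadd x b)"
        using b by (metis vadd_assoc vadd_comm)
      then show ?thesis using IH True b by simp
    qed
  next
    case False
    then obtain a where a: "a \<in> sp n G" "x = vadd v a" using x by auto
    show ?thesis
    proof (cases "y \<in> sp n G")
      case True
      have "vadd x y = vadd v (vadd a y)" using a by (simp add: vadd_assoc)
      then show ?thesis using IH True a by simp
    next
      case False
      then obtain b where b: "b \<in> sp n G" "y = vadd v b" using y by auto
      have "vadd x y = vadd v (vadd v (vadd a b))"
        using a b by (metis vadd_assoc vadd_comm)
      also have "\<dots> = vadd a b" using lv L a b by (simp add: vadd_cancel)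
      finally show ?thesis using IH a b by simp
    qed
  qed
qed

lemma vadd_cancel2: "length x = n \<Longrightarrow> length y = n \<Longrightarrow> vadd (vadd y x) x = y"
  by (metis vadd_cancel vadd_comm)

lemma Vn_eq: "Vn n = {xs. set xs \<subseteq> UNIV \<and> length xs = n}" by (simp add: Vn_def)

lemma finite_Vn[simp]: "finite (Vn n)"
  unfolding Vn_eq by (rule finite_lists_length_eq) simp

lemma card_Vn: "card (Vn n) = 2 ^ n"
  unfolding Vn_eq by (subst card_lists_length_eq) (simp_all add: card_UNIV_bool)

lemma lin_indep_Nil: "lin_indep n []" by (simp add: lin_indep_def)

lemma lin_indep_Cons:
  assumes "lin_indep n G" "v \<notin> sp n G" "v \<in> Vn n" "set G \<subseteq> Vn n"
  shows "lin_indep n (v # G)"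
  unfolding lin_indep_def
proof (intro allI impI)
  fix c i assume c: "length c = length (v # G) \<and> lincomb n (v # G) c = vzero n" and i: "i < length (v # G)"
  then obtain b c' where bc: "c = b # c'" "length c' = length G" by (cases c) auto
  let ?w = "lincomb n G c'"
  have w: "?w \<in> sp n G" using bc(2) gspan_sp[of n G] unfolding gspan_def by auto
  then have lw: "length ?w = n" using sp_Vn[OF assms(4)] by (auto simp: Vn_def)
  have lv: "length v = n" using assms(3) by (simp add: Vn_def)
  have nb: "\<not> b"
  proof
    assume b
    then have e: "vadd v ?w = vzero n" using c bc by (simp add: lincomb_Cons)
    have "v = vadd (vadd v ?w) ?w" using lv lw by (simp add: vadd_cancel2)
    also have "\<dots> = ?w" using e lw by (simp add: vadd_zero)
    finally show False using w assms(2) by simp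
  qed
  then have "?w = vzero n" using c bc by (simp add: lincomb_Cons)
  then have "\<forall>k<length G. \<not> c' ! k" using assms(1) bc(2) by (simp add: lin_indep_def)
  then show "\<not> c ! i" using nb bc i by (cases i) auto
qed

lemma finite_sp: "finite (sp n G)" by (induction G) auto

lemma card_sp: "card (sp n G) \<le> 2 ^ length G"
proof (induction G)
  case Nil then show ?case by simp
next
  case (Cons v G)
  have "card (sp n (v # G)) \<le> card (sp n G) + card (vadd v ` sp n G)"
    by (simp add: card_Un_le)
  also have "\<dots> \<le> 2 * card (sp n G)" using card_image_le[OF finite_sp] by simp
  finally show ?case using Cons by simp
qed

lemma setadd_Cons: "setadd (sp n (v # G)) S = setadd (sp n G) S \<union> vadd v ` setadd (sp n G) S"
proof -
  have "setadd (A \<union> vadd v ` A) S = setadd A S \<union> vadd v ` setadd A S" for A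
  proof (intro equalityI subsetI)
    fix z assume "z \<in> setadd (A \<union> vadd v ` A) S"
    then obtain b1 b2 where z: "z = vadd b1 b2" "b1 \<in> A \<union> vadd v ` A" "b2 \<in> S"
      unfolding setadd_def by auto
    show "z \<in> setadd A S \<union> vadd v ` setadd A S"
    proof (cases "b1 \<in> A")
      case True then show ?thesis using z unfolding setadd_def by auto
    next
      case False
      then obtain a where a: "a \<in> A" "b1 = vadd v a" using z by auto
      then have zz: "z = vadd v (vadd a b2)" using z by (simp add: vadd_assoc)
      have "vadd a b2 \<in> setadd A S" using a z unfolding setadd_def by auto
      then show ?thesis using zz by blast
    qed
  next
    fix z assume "z \<in> setadd A S \<union> vadd v ` setadd A S"
    then show "z \<in> setadd (A \<union> vadd v ` A) S"
    proof
      assume "z \<in> setadd A S" then show ?thesis unfolding setadd_def by auto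
    next
      assume "z \<in> vadd v ` setadd A S"
      then obtain a b where "a \<in> A" "b \<in> S" "z = vadd (vadd v a) b"
        unfolding setadd_def by (auto simp: vadd_assoc)
      then show ?thesis unfolding setadd_def by auto
    qed
  qed
  then show ?thesis by simp
qed

lemma uncovered:
  assumes "v \<in> Vn n" "BS \<subseteq> Vn n"
  shows "Vn n - (BS \<union> vadd v ` BS) = {x \<in> Vn n - BS. vadd v x \<in> Vn n - BS}"
proof -
  have "x \<in> vadd v ` BS \<longleftrightarrow> vadd v x \<in> BS" if x: "x \<in> Vn n" for x
  proof
    assume "x \<in> vadd v ` BS"
    then obtain y where y: "y \<in> BS" "x = vadd v y" by auto
    then have "vadd v x = y" using assms by (auto simp: Vn_def vadd_cancel)
    then show "vadd v x \<in> BS" using y by simp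
  next
    assume "vadd v x \<in> BS"
    moreover have "x = vadd v (vadd v x)" using x assms by (auto simp: Vn_def vadd_cancel)
    ultimately show "x \<in> vadd v ` BS" by blast
  qed
  then show ?thesis using assms(1) by (auto intro: vadd_Vn)
qed

lemma count_sum:
  assumes "U \<subseteq> Vn n"
  shows "(\<Sum>v\<in>Vn n. card {x\<in>U. vadd v x \<in> U}) = card U * card U"
proof -
  have fU: "finite U" using finite_subset[OF assms finite_Vn] .
  have "(\<Sum>v\<in>Vn n. card {x\<in>U. vadd v x \<in> U}) = (\<Sum>v\<in>Vn n. \<Sum>x\<in>U. if vadd v x \<in> U then 1 else 0)"
    using fU by (simp add: sum.inter_filter[symmetric])
  also have "\<dots> = (\<Sum>x\<in>U. \<Sum>v\<in>Vn n. if vadd v x \<in> U then 1 else 0)"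
    by (rule sum.swap)
  also have "\<dots> = (\<Sum>x\<in>U. card {v\<in>Vn n. vadd v x \<in> U})"
    by (simp add: sum.inter_filter[symmetric])
  also have "\<dots> = (\<Sum>x\<in>U. card U)"
  proof (rule sum.cong[OF refl])
    fix x assume x: "x \<in> U"
    then have lx: "length x = n" using assms by (auto simp: Vn_def)
    have "bij_betw (\<lambda>v. vadd v x) {v\<in>Vn n. vadd v x \<in> U} U"
    proof (rule bij_betw_byWitness[where f' = "\<lambda>u. vadd u x"])
      show "\<forall>a\<in>{v \<in> Vn n. vadd v x \<in> U}. vadd (vadd a x) x = a"
        using lx by (auto simp: Vn_def vadd_cancel2)
      show "\<forall>a'\<in>U. vadd (vadd a' x) x = a'"
        using lx assms by (auto simp: Vn_def vadd_cancel2)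
      show "(\<lambda>v. vadd v x) ` {v \<in> Vn n. vadd v x \<in> U} \<subseteq> U" by auto
      show "(\<lambda>u. vadd u x) ` U \<subseteq> {v \<in> Vn n. vadd v x \<in> U}"
        using lx assms by (auto simp: Vn_def vadd_cancel2)
    qed
    then show "card {v\<in>Vn n. vadd v x \<in> U} = card U" by (rule bij_betw_same_card)
  qed
  also have "\<dots> = card U * card U" by simp
  finally show ?thesis .
qed

lemma exists_good:
  assumes "U \<subseteq> Vn n"
  shows "\<exists>v\<in>Vn n. card {x\<in>U. vadd v x \<in> U} * 2 ^ n \<le> card U * card U"
proof (rule ccontr)
  assume "\<not> ?thesis"
  then have h: "\<forall>v\<in>Vn n. card U * card U < card {x\<in>U. vadd v x \<in> U} * 2 ^ n" by auto
  have ne: "Vn n \<noteq> {}" using vzero_Vn by blast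
  have "(\<Sum>v\<in>Vn n. card U * card U) < (\<Sum>v\<in>Vn n. card {x\<in>U. vadd v x \<in> U} * 2 ^ n)"
    by (rule sum_strict_mono[OF finite_Vn ne]) (use h in auto)
  also have "\<dots> = card U * card U * 2 ^ n"
    using count_sum[OF assms] by (simp add: sum_distrib_right[symmetric])
  finally show False by (simp add: card_Vn)
qed

lemma setadd_Vn: "A \<subseteq> Vn n \<Longrightarrow> S \<subseteq> Vn n \<Longrightarrow> setadd A S \<subseteq> Vn n"
  unfolding setadd_def by (auto intro: vadd_Vn)

lemma main:
  assumes S: "S \<subseteq> Vn n" "vzero n \<in> S"
  shows "k \<le> n \<Longrightarrow> \<exists>G. length G = k \<and> set G \<subseteq> Vn n \<and> lin_indep n G \<and>
     real (card (Vn n - setadd (sp n G) S)) \<le> 2^n * (1 - real (card S) / 2^n) ^ (2^k)"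
proof (induction k)
  have fS: "finite S" using finite_subset[OF S(1) finite_Vn] .
  have cS: "card S \<le> 2^n" using card_mono[OF finite_Vn S(1)] by (simp add: card_Vn)
  case 0
  have "setadd (sp n []) S = S"
  proof (intro equalityI subsetI)
    fix x assume "x \<in> setadd (sp n []) S"
    then obtain s where "s \<in> S" "x = vadd (vzero n) s" unfolding setadd_def by auto
    then show "x \<in> S" using S(1) by (auto simp: vadd_zero Vn_def)
  next
    fix x assume x: "x \<in> S"
    then have "x = vadd (vzero n) x" using S(1) by (auto simp: vadd_zero Vn_def)
    then show "x \<in> setadd (sp n []) S" using x unfolding setadd_def by auto
  qed
  moreover have "card (Vn n - S) = 2^n - card S"
    using card_Diff_subset[OF fS S(1)] by (simp add: card_Vn)
  moreover have "real (2^n - card S) = 2^n * (1 - real (card S) / 2^n)"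
    using cS by (simp add: of_nat_diff field_simps)
  ultimately show ?case by (intro exI[of _ "[]"]) (simp add: lin_indep_Nil)
next
  case (Suc k)
  have fS: "finite S" using finite_subset[OF S(1) finite_Vn] .
  have cS: "card S \<le> 2^n" using card_mono[OF finite_Vn S(1)] by (simp add: card_Vn)
  define a :: real where "a = 1 - real (card S) / 2^n"
  have a0: "0 \<le> a" using cS unfolding a_def by (simp add: field_simps)
  from Suc obtain G where G: "length G = k" "set G \<subseteq> Vn n" "lin_indep n G"
    "real (card (Vn n - setadd (sp n G) S)) \<le> 2^n * a ^ (2^k)"
    unfolding a_def by auto
  define BS where "BS = setadd (sp n G) S"
  define U where "U = Vn n - BS"
  have spV: "sp n G \<subseteq> Vn n" using sp_Vn[OF G(2)] .
  have BSV: "BS \<subseteq> Vn n" unfolding BS_def using setadd_Vn[OF spV S(1)] .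
  have zz: "vadd (vzero n) (vzero n) = vzero n" by (simp add: vadd_zero)
  have "vadd (vzero n) (vzero n) \<in> BS" unfolding BS_def setadd_def using sp_zero[of n G] S(2)
    by blast
  then have z: "vzero n \<in> BS" using zz by simp
  have UV: "U \<subseteq> Vn n" unfolding U_def by auto
  have "U \<subset> Vn n" using UV z vzero_Vn unfolding U_def by blast
  then have mlt: "card U < 2^n"
    using psubset_card_mono[OF finite_Vn, of U] by (simp add: card_Vn)
  have U': "Vn n - setadd (sp n (v # G)) S = {x\<in>U. vadd v x \<in> U}" if "v \<in> Vn n" for v
    unfolding setadd_Cons U_def BS_def[symmetric] using uncovered[OF that BSV] .
  have bnd0: "0 \<le> 2^n * a ^ (2^Suc k)" using a0 by simp
  show ?case
  proof (cases "card U = 0")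
    case True
    have "\<not> Vn n \<subseteq> sp n G"
    proof
      assume "Vn n \<subseteq> sp n G"
      then have "card (Vn n) \<le> card (sp n G)" using card_mono[OF finite_sp] by blast
      also have "\<dots> \<le> 2^k" using card_sp[of n G] G(1) by simp
      also have "\<dots> < 2^n" using Suc.prems by simp
      finally show False by (simp add: card_Vn)
    qed
    then obtain v where v: "v \<in> Vn n" "v \<notin> sp n G" by blast
    have "U = {}" using True finite_subset[OF UV finite_Vn] by simp
    then have cc: "card (Vn n - setadd (sp n (v # G)) S) = 0" using U'[OF v(1)] by simp
    have c0: "real (card (Vn n - setadd (sp n (v # G)) S)) \<le> 2^n * a ^ (2^Suc k)"
      unfolding cc using bnd0 by (simp only: of_nat_0)
    show ?thesis
      by (rule exI[of _ "v # G"]) (use v G c0 lin_indep_Cons[OF G(3) v(2) v(1) G(2)] in \<open>simp only: a_def, simp\<close>)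
  next
    case False
    obtain v where v: "v \<in> Vn n" and fv: "card {x\<in>U. vadd v x \<in> U} * 2^n \<le> card U * card U"
      using exists_good[OF UV] by blast
    have "card U * card U < card U * 2^n" using False mlt by simp
    then have "card {x\<in>U. vadd v x \<in> U} * 2^n < card U * 2^n" using fv by linarith
    then have flt: "card {x\<in>U. vadd v x \<in> U} < card U" by simp
    have vn: "v \<notin> sp n G"
    proof
      assume vs: "v \<in> sp n G"
      have "{x\<in>U. vadd v x \<in> U} = U"
      proof (intro equalityI subsetI)
        fix x assume x: "x \<in> U"
        have xV: "x \<in> Vn n" using x UV by auto
        have "vadd v x \<notin> BS"
        proof
          assume "vadd v x \<in> BS"
          then obtain b s where bs: "b \<in> sp n G" "s \<in> S" "vadd v x = vadd b s"
            unfolding BS_def setadd_def by auto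
          have "x = vadd v (vadd v x)" using xV v by (simp add: Vn_def vadd_cancel)
          also have "\<dots> = vadd (vadd v b) s" using bs by (simp add: vadd_assoc)
          finally have "x \<in> BS" unfolding BS_def setadd_def
            using sp_closed[OF G(2) vs bs(1)] bs(2) by auto
          then show False using x unfolding U_def by auto
        qed
        then show "x \<in> {x\<in>U. vadd v x \<in> U}" using x xV v vadd_Vn unfolding U_def by auto
      qed auto
      then show False using flt by simp
    qed
    define t where "t = a ^ (2^k)"
    have t0: "0 \<le> t" using a0 unfolding t_def by simp
    have mU: "real (card U) \<le> 2^n * t" using G(4) unfolding t_def U_def BS_def .
    have "real (card U) * real (card U) \<le> (2^n * t) * (2^n * t)"
      using mU by (intro mult_mono) auto
    moreover have "real (card {x\<in>U. vadd v x \<in> U}) * 2^n \<le> real (card U) * real (card U)"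
    proof -
      have "real (card {x\<in>U. vadd v x \<in> U} * 2^n) \<le> real (card U * card U)"
        using fv by (simp only: of_nat_le_iff)
      then show ?thesis by simp
    qed
    moreover have "(2^n * t) * (2^n * t) = (2^n * t^2) * (2^n::real)"
      by (simp add: power2_eq_square mult_ac)
    ultimately have "real (card {x\<in>U. vadd v x \<in> U}) * 2^n \<le> (2^n * t^2) * 2^n"
      by linarith
    then have "real (card {x\<in>U. vadd v x \<in> U}) \<le> 2^n * t^2" by (simp add: mult.commute)
    moreover have "t^2 = a ^ (2 ^ Suc k)" unfolding t_def by (simp add: power_mult[symmetric] mult.commute)
    ultimately show ?thesis using v G lin_indep_Cons[OF G(3) vn v G(2)] U'[OF v]
      unfolding a_def by (intro exI[of _ "v # G"]) simp
  qed
qed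

lemma key_ineq:
  fixes n j :: nat and c :: real
  assumes n: "n > 0" and c: "c \<ge> 1" "c \<le> 2^n"
    and h: "real n - log 2 c + log 2 (real n) \<le> real j"
  shows "2^n * (1 - c / 2^n) ^ (2^j) < 1"
proof -
  define s where "s = c / 2^n"
  have s0: "0 \<le> 1 - s" using c unfolding s_def by (simp add: field_simps)
  have "2 powr (real n - log 2 c + log 2 (real n)) \<le> 2 powr (real j)"
    using h by simp
  moreover have "2 powr (real n - log 2 c + log 2 (real n)) = 2^n * real n / c"
    using c n by (simp add: powr_add powr_diff powr_realpow)
  ultimately have "2^n * real n / c \<le> 2^j" by (simp add: powr_realpow)
  then have "real n \<le> s * 2^j" using c unfolding s_def by (simp add: field_simps)
  have "(1 - s) ^ (2^j) \<le> exp (- s) ^ (2^j)"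
    using s0 exp_ge_add_one_self[of "-s"] by (intro power_mono) auto
  also have "\<dots> = exp (- (s * 2^j))"
    using exp_of_nat_mult[of "2^j" "-s"] by (simp add: mult.commute)
  also have "\<dots> \<le> exp (- real n)" using \<open>real n \<le> s * 2^j\<close> by simp
  also have "\<dots> = exp (-1) ^ n" using exp_of_nat_mult[of n "-1"] by simp
  finally have A: "2^n * (1 - s) ^ (2^j) \<le> 2^n * exp (-1) ^ n" by simp
  have e: "2 < exp (1::real)"
    by (metis dbl_def dbl_simps(3) equation_minus_iff exp_minus_greater uminus_add_conv_diff zero_neq_neg_one)
  have "(2::real) * exp (-1) < 1" using e by (simp add: exp_minus field_simps)
  moreover have "0 < (2::real) * exp (-1)" by simp
  ultimately have "(2 * exp (-1)) ^ n < (1::real)"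
    using n power_Suc_less_one[of "2 * exp (-1::real)" "n - 1"] by simp
  then have "2^n * exp (-1) ^ n < (1::real)" by (simp add: power_mult_distrib)
  with A show ?thesis unfolding s_def by linarith
qed

theorem lemma7:
  fixes \<beta> p n j :: nat
  assumes "\<beta> > 0" "p > 0" "n > 0"
    and "real n - log 2 (real (card (Sn n \<beta> p))) + log 2 (real n) \<le> real j"
    and "j \<le> n"
  shows "\<exists>B. linear_code n j B \<and> mB n \<beta> p B < 1 \<and> setadd B (Sn n \<beta> p) = Vn n"
proof -
  define S where "S = Sn n \<beta> p"
  have SV: "S \<subseteq> Vn n" unfolding S_def Sn_def by auto
  have zS: "vzero n \<in> S" unfolding S_def Sn_def window_limited_def window_weight_def
    by (simp add: vzero_def Vn_def)
  have fS: "finite S" using finite_subset[OF SV finite_Vn] .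
  have c1: "real (card S) \<ge> 1" using zS fS card_0_eq[OF fS] by (cases "card S") auto
  have c2: "real (card S) \<le> 2^n" using card_mono[OF finite_Vn SV] by (simp add: card_Vn)
  obtain G where G: "length G = j" "set G \<subseteq> Vn n" "lin_indep n G"
    "real (card (Vn n - setadd (sp n G) S)) \<le> 2^n * (1 - real (card S) / 2^n) ^ (2^j)"
    using main[OF SV zS assms(5)] by blast
  have lt: "real (card (Vn n - setadd (sp n G) S)) < 1"
    using G(4) key_ineq[OF assms(3) c1 c2 assms(4)[folded S_def]] by linarith
  then have c0: "card (Vn n - setadd (sp n G) S) = 0" by simp
  then have "Vn n - setadd (sp n G) S = {}" using finite_Diff[OF finite_Vn] by auto
  moreover have "setadd (sp n G) S \<subseteq> Vn n" using setadd_Vn[OF sp_Vn[OF G(2)] SV] .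
  ultimately have eq: "setadd (sp n G) S = Vn n" by blast
  have lc: "linear_code n j (sp n G)"
    unfolding linear_code_def subspace2_def
    using sp_Vn[OF G(2)] sp_zero sp_closed[OF G(2)] G(1-3) gspan_sp by blast
  show ?thesis
    using lc c0 eq unfolding mB_def S_def[symmetric] by blast
qed

end
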